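(* Let $\Re$ be a commutative Krasner hyperring with identity $1\ne0$, $\phi$ a hyperideal reduction and $\delta$ a hyperideal expansion on $L(\Re)$, and $\{M_i:i\in\Delta\}$ a directed family of $\phi$-$\delta$-primary hyperideals of $\Re$. Then $M=\bigcup_{i\in\Delta}M_i$ is a $\phi$-$\delta$-primary hyperideal of $\Re$.
   Context: Krasner hyperring: $(\Re,\oplus)$ canonical hypergroup, $(\Re,\circ)$ commutative semigroup with identity $1\ne0$, $0$ absorbing, distributive; hyperideals and $L(\Re)$ as usual. Reduction: $\phi(N)\subseteq N$, monotone, values in $L(\Re)\cup\{\emptyset\}$; expansion: $N\subseteq\delta(N)$, monotone. Directed family: for all $i,j$ there is $k$ with $M_i\cup M_j\subseteq M_k$. A proper hyperideal $N$ is $\phi$-$\delta$-primary if $a\circ b\in N$, $a\circ b\notin\phi(N)$ imply $a\in N$ or $b\in\delta(N)$. *)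

theory Defs
  imports Main
begin

definition hsum :: "('a \<Rightarrow> 'a \<Rightarrow> 'a set) \<Rightarrow> 'a set \<Rightarrow> 'a set \<Rightarrow> 'a set" where
  "hsum hplus A B = (\<Union>a\<in>A. \<Union>b\<in>B. hplus a b)"

definition canonical_hypergroup ::
  "'a set \<Rightarrow> ('a \<Rightarrow> 'a \<Rightarrow> 'a set) \<Rightarrow> 'a \<Rightarrow> bool" where
  "canonical_hypergroup R hplus hzero \<longleftrightarrow>
     (\<forall>x\<in>R. \<forall>y\<in>R. hplus x y \<subseteq> R \<and> hplus x y \<noteq> {}) \<and>
     (\<forall>x\<in>R. \<forall>y\<in>R. \<forall>z\<in>R. hsum hplus (hplus x y) {z} = hsum hplus {x} (hplus y z)) \<and>
     (\<forall>x\<in>R. \<forall>y\<in>R. hplus x y = hplus y x) \<and>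
     hzero \<in> R \<and> (\<forall>x\<in>R. hplus hzero x = {x}) \<and>
     (\<forall>x\<in>R. \<exists>!y. y \<in> R \<and> hzero \<in> hplus x y) \<and>
     (\<forall>x\<in>R. \<forall>y\<in>R. \<forall>z\<in>R. z \<in> hplus x y \<longrightarrow>
        (\<exists>nx\<in>R. \<exists>ny\<in>R. hzero \<in> hplus x nx \<and> hzero \<in> hplus y ny \<and>
           y \<in> hplus nx z \<and> x \<in> hplus z ny))"

definition hneg :: "'a set \<Rightarrow> ('a \<Rightarrow> 'a \<Rightarrow> 'a set) \<Rightarrow> 'a \<Rightarrow> 'a \<Rightarrow> 'a" where
  "hneg R hplus hzero x = (THE y. y \<in> R \<and> hzero \<in> hplus x y)"

definition krasner_hyperring ::
  "'a set \<Rightarrow> ('a \<Rightarrow> 'a \<Rightarrow> 'a set) \<Rightarrow> ('a \<Rightarrow> 'a \<Rightarrow> 'a) \<Rightarrow> 'a \<Rightarrow> 'a \<Rightarrow> bool" where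
  "krasner_hyperring R hplus hmult hzero hone \<longleftrightarrow>
     canonical_hypergroup R hplus hzero \<and>
     (\<forall>x\<in>R. \<forall>y\<in>R. hmult x y \<in> R) \<and>
     (\<forall>x\<in>R. \<forall>y\<in>R. \<forall>z\<in>R. hmult (hmult x y) z = hmult x (hmult y z)) \<and>
     (\<forall>x\<in>R. \<forall>y\<in>R. hmult x y = hmult y x) \<and>
     hone \<in> R \<and> hone \<noteq> hzero \<and> (\<forall>x\<in>R. hmult hone x = x) \<and>
     (\<forall>x\<in>R. hmult hzero x = hzero) \<and>
     (\<forall>x\<in>R. \<forall>y\<in>R. \<forall>z\<in>R. (hmult z) ` (hplus x y) = hplus (hmult z x) (hmult z y))"

definition hyperideal ::
  "'a set \<Rightarrow> ('a \<Rightarrow> 'a \<Rightarrow> 'a set) \<Rightarrow> ('a \<Rightarrow> 'a \<Rightarrow> 'a) \<Rightarrow> 'a \<Rightarrow> 'a set \<Rightarrow> bool" where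
  "hyperideal R hplus hmult hzero I \<longleftrightarrow>
     I \<subseteq> R \<and> I \<noteq> {} \<and>
     (\<forall>a\<in>I. \<forall>b\<in>I. hplus a (hneg R hplus hzero b) \<subseteq> I) \<and>
     (\<forall>a\<in>I. \<forall>r\<in>R. hmult r a \<in> I)"

definition hyperideals ::
  "'a set \<Rightarrow> ('a \<Rightarrow> 'a \<Rightarrow> 'a set) \<Rightarrow> ('a \<Rightarrow> 'a \<Rightarrow> 'a) \<Rightarrow> 'a \<Rightarrow> 'a set set" where
  "hyperideals R hplus hmult hzero = {I. hyperideal R hplus hmult hzero I}"

definition hyperideal_reduction ::
  "'a set \<Rightarrow> ('a \<Rightarrow> 'a \<Rightarrow> 'a set) \<Rightarrow> ('a \<Rightarrow> 'a \<Rightarrow> 'a) \<Rightarrow> 'a \<Rightarrow> ('a set \<Rightarrow> 'a set) \<Rightarrow> bool" where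
  "hyperideal_reduction R hplus hmult hzero \<phi> \<longleftrightarrow>
     (\<forall>N\<in>hyperideals R hplus hmult hzero. \<phi> N \<subseteq> N \<and>
        \<phi> N \<in> hyperideals R hplus hmult hzero \<union> {{}}) \<and>
     (\<forall>N\<in>hyperideals R hplus hmult hzero. \<forall>K\<in>hyperideals R hplus hmult hzero.
        N \<subseteq> K \<longrightarrow> \<phi> N \<subseteq> \<phi> K)"

definition hyperideal_expansion ::
  "'a set \<Rightarrow> ('a \<Rightarrow> 'a \<Rightarrow> 'a set) \<Rightarrow> ('a \<Rightarrow> 'a \<Rightarrow> 'a) \<Rightarrow> 'a \<Rightarrow> ('a set \<Rightarrow> 'a set) \<Rightarrow> bool" where
  "hyperideal_expansion R hplus hmult hzero \<delta> \<longleftrightarrow>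
     (\<forall>N\<in>hyperideals R hplus hmult hzero. N \<subseteq> \<delta> N) \<and>
     (\<forall>N\<in>hyperideals R hplus hmult hzero. \<forall>K\<in>hyperideals R hplus hmult hzero.
        N \<subseteq> K \<longrightarrow> \<delta> N \<subseteq> \<delta> K)"

definition phi_delta_primary ::
  "'a set \<Rightarrow> ('a \<Rightarrow> 'a \<Rightarrow> 'a set) \<Rightarrow> ('a \<Rightarrow> 'a \<Rightarrow> 'a) \<Rightarrow> 'a \<Rightarrow>
   ('a set \<Rightarrow> 'a set) \<Rightarrow> ('a set \<Rightarrow> 'a set) \<Rightarrow> 'a set \<Rightarrow> bool" where
  "phi_delta_primary R hplus hmult hzero \<phi> \<delta> N \<longleftrightarrow>
     hyperideal R hplus hmult hzero N \<and> N \<noteq> R \<and>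
     (\<forall>a\<in>R. \<forall>b\<in>R. hmult a b \<in> N \<and> hmult a b \<notin> \<phi> N \<longrightarrow> a \<in> N \<or> b \<in> \<delta> N)"

definition directed_family :: "'i set \<Rightarrow> ('i \<Rightarrow> 'a set) \<Rightarrow> bool" where
  "directed_family \<Delta> M \<longleftrightarrow>
     (\<forall>i\<in>\<Delta>. \<forall>j\<in>\<Delta>. \<exists>k\<in>\<Delta>. M i \<union> M j \<subseteq> M k)"

end

theory Submission
  imports Defs
begin

theorem mainTheorem17:
  fixes R :: "'a set" and hplus :: "'a \<Rightarrow> 'a \<Rightarrow> 'a set" and hmult :: "'a \<Rightarrow> 'a \<Rightarrow> 'a"
    and hzero hone :: 'a and \<phi> \<delta> :: "'a set \<Rightarrow> 'a set"
    and \<Delta> :: "'i set" and M :: "'i \<Rightarrow> 'a set"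
  assumes "krasner_hyperring R hplus hmult hzero hone"
    and "hyperideal_reduction R hplus hmult hzero \<phi>"
    and "hyperideal_expansion R hplus hmult hzero \<delta>"
    and "\<Delta> \<noteq> {}"
    and "directed_family \<Delta> M"
    and "\<forall>i\<in>\<Delta>. phi_delta_primary R hplus hmult hzero \<phi> \<delta> (M i)"
  shows "phi_delta_primary R hplus hmult hzero \<phi> \<delta> (\<Union>i\<in>\<Delta>. M i)"
proof -
  let ?U = "\<Union>i\<in>\<Delta>. M i"
  have hi: "\<And>i. i \<in> \<Delta> \<Longrightarrow> hyperideal R hplus hmult hzero (M i)"
    and pr: "\<And>i. i \<in> \<Delta> \<Longrightarrow> M i \<noteq> R"
    and pd: "\<And>i a b. i \<in> \<Delta> \<Longrightarrow> a \<in> R \<Longrightarrow> b \<in> R \<Longrightarrow> hmult a b \<in> M i \<Longrightarrow> hmult a b \<notin> \<phi> (M i) \<Longrightarrow> a \<in> M i \<or> b \<in> \<delta> (M i)"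
    using assms(6) unfolding phi_delta_primary_def by blast+
  have hs: "\<And>i. i \<in> \<Delta> \<Longrightarrow> M i \<subseteq> R" using hi unfolding hyperideal_def by simp
  have hn: "\<And>i. i \<in> \<Delta> \<Longrightarrow> M i \<noteq> {}" using hi unfolding hyperideal_def by simp
  have hc: "\<And>i a b. i \<in> \<Delta> \<Longrightarrow> a \<in> M i \<Longrightarrow> b \<in> M i \<Longrightarrow> hplus a (hneg R hplus hzero b) \<subseteq> M i"
    using hi unfolding hyperideal_def by simp
  have hm: "\<And>i a r. i \<in> \<Delta> \<Longrightarrow> a \<in> M i \<Longrightarrow> r \<in> R \<Longrightarrow> hmult r a \<in> M i"
    using hi unfolding hyperideal_def by simp
  have dir: "\<And>i j. i \<in> \<Delta> \<Longrightarrow> j \<in> \<Delta> \<Longrightarrow> \<exists>k\<in>\<Delta>. M i \<union> M j \<subseteq> M k"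
    using assms(5) unfolding directed_family_def by blast
  have one: "hone \<in> R" using assms(1) unfolding krasner_hyperring_def by (elim conjE)
  have l1: "\<forall>x\<in>R. hmult hone x = x" using assms(1) unfolding krasner_hyperring_def by (elim conjE)
  have cm: "\<forall>x\<in>R. \<forall>y\<in>R. hmult x y = hmult y x" using assms(1) unfolding krasner_hyperring_def by (elim conjE)
  have mone: "hmult x hone = x" if "x \<in> R" for x
  proof -
    have "hmult x hone = hmult hone x" using cm that one by blast
    also have "\<dots> = x" using l1 that by blast
    finally show ?thesis .
  qed
  have hU: "hyperideal R hplus hmult hzero ?U"
    unfolding hyperideal_def
  proof (intro conjI ballI)
    show "?U \<subseteq> R" using hs by blast
    show "?U \<noteq> {}" using hn assms(4) by blast
  next
    fix a b assume "a \<in> ?U" "b \<in> ?U"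
    then obtain i j where ij: "i \<in> \<Delta>" "j \<in> \<Delta>" "a \<in> M i" "b \<in> M j" by blast
    then obtain k where "k \<in> \<Delta>" "M i \<union> M j \<subseteq> M k" using dir by blast
    then show "hplus a (hneg R hplus hzero b) \<subseteq> ?U"
    proof -
      have "a \<in> M k" "b \<in> M k" using ij \<open>M i \<union> M j \<subseteq> M k\<close> by blast+
      then show ?thesis using hc[OF \<open>k \<in> \<Delta>\<close>] \<open>k \<in> \<Delta>\<close> by blast
    qed
  next
    fix a r assume "a \<in> ?U" "r \<in> R"
    then show "hmult r a \<in> ?U" using hm by blast
  qed
  have HU: "?U \<in> hyperideals R hplus hmult hzero" using hU by (simp add: hyperideals_def)
  have HM: "\<And>i. i \<in> \<Delta> \<Longrightarrow> M i \<in> hyperideals R hplus hmult hzero" using hi by (simp add: hyperideals_def)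
  have notone: "\<And>i. i \<in> \<Delta> \<Longrightarrow> hone \<notin> M i"
  proof
    fix i assume i: "i \<in> \<Delta>" "hone \<in> M i"
    have "R \<subseteq> M i"
    proof
      fix x assume "x \<in> R"
      then have "hmult x hone \<in> M i" using hm[OF i(1) i(2)] by blast
      then show "x \<in> M i" using mone \<open>x \<in> R\<close> by simp
    qed
    then show False using pr[OF i(1)] hs[OF i(1)] by blast
  qed
  have "?U \<noteq> R" using notone one by blast
  moreover have "\<forall>a\<in>R. \<forall>b\<in>R. hmult a b \<in> ?U \<and> hmult a b \<notin> \<phi> ?U \<longrightarrow> a \<in> ?U \<or> b \<in> \<delta> ?U"
  proof (intro ballI impI)
    fix a b assume ab: "a \<in> R" "b \<in> R" "hmult a b \<in> ?U \<and> hmult a b \<notin> \<phi> ?U"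
    then obtain i where i: "i \<in> \<Delta>" "hmult a b \<in> M i" by blast
    have sub: "M i \<subseteq> ?U" using i by blast
    have "\<phi> (M i) \<subseteq> \<phi> ?U" using assms(2) HM[OF i(1)] HU sub
      unfolding hyperideal_reduction_def by blast
    then have "hmult a b \<notin> \<phi> (M i)" using ab by blast
    then have "a \<in> M i \<or> b \<in> \<delta> (M i)" using pd i ab by blast
    moreover have "\<delta> (M i) \<subseteq> \<delta> ?U" using assms(3) HM[OF i(1)] HU sub
      unfolding hyperideal_expansion_def by blast
    ultimately show "a \<in> ?U \<or> b \<in> \<delta> ?U" using sub by blast
  qed
  ultimately show ?thesis using hU unfolding phi_delta_primary_def by blast
qed

end
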